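(* Let $(S,E,f)$ be a reduced and closed observation table for $U$ and $D$ as defined below, and suppose the marking of $\mathcal{T}_{S,f}$ fails. Then there are $s,t\in S$, $z,w\in\Sigma^*$ with $\delta_f^*(\epsilon,sz)=t$ and $\delta_f^*(\epsilon,tw)=s$, and nonempty $x,y\in\Sigma^+$ with $x^\omega,y^\omega\in E$, $s\in\mathrm{Inf}_{\mathcal{T}_{S,f}}(sx^\omega)$ and $t\in\mathrm{Inf}_{\mathcal{T}_{S,f}}(ty^\omega)$, such that $f(s,x^\omega)=\text{yes}$ and $f(t,y^\omega)=\text{no}$.
   Context: $\Sigma$ is a finite alphabet, $U\subseteq\Sigma^\omega$ recognizable by a weak deterministic Büchi automaton, $D\subseteq\Sigma^\omega$ regular with trivial right-congruence (for all $w\in\Sigma^*,\alpha$: $\alpha\in D\iff w\alpha\in D$). An observation table $(S,E,f)$ consists of a prefix-closed finite $S\subseteq\Sigma^*$, a suffix-closed finite set $E$ of ultimately periodic words with $E\cap D=\emptyset$, and $f:(S\cup S\Sigma)\times E\to\{\text{yes},\text{no}\}$ with $f(s,\alpha)=\text{yes}$ iff $s\alpha\in U$; $f_s(\alpha)=f(s,\alpha)$. Reduced: $f_s\neq f_t$ for distinct $s,t\in S$; closed: every $s\in S\Sigma$ has $t\in S$ with $f_s=f_t$. $\mathcal{T}_{S,f}=(\Sigma,S,\delta_f,\epsilon)$ with $\delta_f(s,\sigma)$ the unique $t\in S$ with $f_{s\sigma}=f_t$; $\delta_f^*$ is its extension to words; $\mathrm{Inf}_{\mathcal{T}_{S,f}}(\beta)$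 is the set of states visited infinitely often by the run of $\beta$ from $\epsilon$. Marking: for each $\alpha\in S\cdot E$, every state in $\mathrm{Inf}_{\mathcal{T}_{S,f}}(\alpha)$ is marked "yes" if $\alpha\in U$ and "no" if $\alpha\notin U$. The marking fails iff there are states $s,t$ (possibly equal) in the same maximal strongly connected component of $\mathcal{T}_{S,f}$ such that $s$ is marked "yes" and $t$ is marked "no". *)

theory Defs
  imports Main "HOL-Library.Omega_Words_Fun"
begin

(* Alphabet Sigma = the finite type 'a; finite words = 'a list; omega-words = 'a word. *)

definition dstep_star :: "('q \<Rightarrow> 'a \<Rightarrow> 'q) \<Rightarrow> 'q \<Rightarrow> 'a list \<Rightarrow> 'q" where
  "dstep_star \<delta> q w = foldl \<delta> q w"

definition drun :: "('q \<Rightarrow> 'a \<Rightarrow> 'q) \<Rightarrow> 'q \<Rightarrow> 'a word \<Rightarrow> 'q word" where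
  "drun \<delta> q \<alpha> = (\<lambda>n. dstep_star \<delta> q (prefix n \<alpha>))"

definition dInf :: "('q \<Rightarrow> 'a \<Rightarrow> 'q) \<Rightarrow> 'q \<Rightarrow> 'a word \<Rightarrow> 'q set" where
  "dInf \<delta> q \<alpha> = limit (drun \<delta> q \<alpha>)"

definition weak_dba :: "nat set \<Rightarrow> nat \<Rightarrow> (nat \<Rightarrow> 'a \<Rightarrow> nat) \<Rightarrow> nat set \<Rightarrow> bool" where
  "weak_dba Q q0 \<delta> F \<longleftrightarrow> finite Q \<and> q0 \<in> Q \<and> (\<forall>q\<in>Q. \<forall>a. \<delta> q a \<in> Q) \<and> F \<subseteq> Q \<and>
     (\<forall>p\<in>Q. \<forall>q\<in>Q. (\<exists>u. dstep_star \<delta> p u = q) \<and> (\<exists>v. dstep_star \<delta> q v = p)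
        \<longrightarrow> (p \<in> F \<longleftrightarrow> q \<in> F))"

definition dba_lang :: "nat \<Rightarrow> (nat \<Rightarrow> 'a \<Rightarrow> nat) \<Rightarrow> nat set \<Rightarrow> 'a word set" where
  "dba_lang q0 \<delta> F = {\<alpha>. dInf \<delta> q0 \<alpha> \<inter> F \<noteq> {}}"

definition weak_dba_recognizable :: "'a word set \<Rightarrow> bool" where
  "weak_dba_recognizable L \<longleftrightarrow>
     (\<exists>Q q0 \<delta> F. weak_dba Q q0 \<delta> F \<and> L = dba_lang q0 \<delta> F)"

definition nba_accepts ::
  "nat set \<Rightarrow> nat set \<Rightarrow> (nat \<times> 'a \<times> nat) set \<Rightarrow> nat set \<Rightarrow> 'a word \<Rightarrow> bool" where
  "nba_accepts Q I \<Delta> F \<alpha> \<longleftrightarrow>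
     (\<exists>r :: nat word. r 0 \<in> I \<and> (\<forall>n. (r n, \<alpha> n, r (Suc n)) \<in> \<Delta>) \<and> limit r \<inter> F \<noteq> {})"

definition omega_regular :: "'a word set \<Rightarrow> bool" where
  "omega_regular L \<longleftrightarrow>
     (\<exists>Q I \<Delta> F. finite Q \<and> I \<subseteq> Q \<and> \<Delta> \<subseteq> Q \<times> UNIV \<times> Q \<and> F \<subseteq> Q \<and>
        L = {\<alpha>. nba_accepts Q I \<Delta> F \<alpha>})"

definition trivial_right_congruence :: "'a word set \<Rightarrow> bool" where
  "trivial_right_congruence D \<longleftrightarrow> (\<forall>(w::'a list) \<alpha>. \<alpha> \<in> D \<longleftrightarrow> w \<frown> \<alpha> \<in> D)"

definition ultimately_periodic :: "'a word \<Rightarrow> bool" where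
  "ultimately_periodic \<alpha> \<longleftrightarrow> (\<exists>u v. v \<noteq> [] \<and> \<alpha> = u \<frown> v\<^sup>\<omega>)"

(* f is given on all pairs, but is only constrained on (S \<union> S\<Sigma>) \<times> E *)
definition obs_table ::
  "'a word set \<Rightarrow> 'a word set \<Rightarrow> 'a list set \<Rightarrow> 'a word set \<Rightarrow> ('a list \<Rightarrow> 'a word \<Rightarrow> bool) \<Rightarrow> bool" where
  "obs_table U D S E f \<longleftrightarrow>
     finite S \<and> [] \<in> S \<and> (\<forall>s\<in>S. \<forall>u v. s = u @ v \<longrightarrow> u \<in> S) \<and>
     finite E \<and> (\<forall>\<alpha>\<in>E. \<forall>k. suffix k \<alpha> \<in> E) \<and> (\<forall>\<alpha>\<in>E. ultimately_periodic \<alpha>) \<and>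
     E \<inter> D = {} \<and>
     (\<forall>s. (s \<in> S \<or> (\<exists>s'\<in>S. \<exists>\<sigma>. s = s' @ [\<sigma>])) \<longrightarrow>
          (\<forall>\<alpha>\<in>E. f s \<alpha> \<longleftrightarrow> s \<frown> \<alpha> \<in> U))"

definition row_eq :: "'a word set \<Rightarrow> ('a list \<Rightarrow> 'a word \<Rightarrow> bool) \<Rightarrow> 'a list \<Rightarrow> 'a list \<Rightarrow> bool" where
  "row_eq E f s t \<longleftrightarrow> (\<forall>\<alpha>\<in>E. f s \<alpha> = f t \<alpha>)"

definition reduced :: "'a list set \<Rightarrow> 'a word set \<Rightarrow> ('a list \<Rightarrow> 'a word \<Rightarrow> bool) \<Rightarrow> bool" where
  "reduced S E f \<longleftrightarrow> (\<forall>s\<in>S. \<forall>t\<in>S. s \<noteq> t \<longrightarrow> \<not> row_eq E f s t)"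

definition closed :: "'a list set \<Rightarrow> 'a word set \<Rightarrow> ('a list \<Rightarrow> 'a word \<Rightarrow> bool) \<Rightarrow> bool" where
  "closed S E f \<longleftrightarrow> (\<forall>s\<in>S. \<forall>\<sigma>. \<exists>t\<in>S. row_eq E f (s @ [\<sigma>]) t)"

definition delta_f ::
  "'a list set \<Rightarrow> 'a word set \<Rightarrow> ('a list \<Rightarrow> 'a word \<Rightarrow> bool) \<Rightarrow> 'a list \<Rightarrow> 'a \<Rightarrow> 'a list" where
  "delta_f S E f s \<sigma> = (THE t. t \<in> S \<and> row_eq E f (s @ [\<sigma>]) t)"

abbreviation delta_f_star where
  "delta_f_star S E f \<equiv> dstep_star (delta_f S E f)"

abbreviation Inf_T where
  "Inf_T S E f \<beta> \<equiv> dInf (delta_f S E f) [] \<beta>"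

definition same_scc ::
  "'a list set \<Rightarrow> 'a word set \<Rightarrow> ('a list \<Rightarrow> 'a word \<Rightarrow> bool) \<Rightarrow> 'a list \<Rightarrow> 'a list \<Rightarrow> bool" where
  "same_scc S E f s t \<longleftrightarrow>
     (\<exists>u. delta_f_star S E f s u = t) \<and> (\<exists>v. delta_f_star S E f t v = s)"

definition marked_yes where
  "marked_yes U S E f q \<longleftrightarrow> (\<exists>s\<in>S. \<exists>e\<in>E. s \<frown> e \<in> U \<and> q \<in> Inf_T S E f (s \<frown> e))"

definition marked_no where
  "marked_no U S E f q \<longleftrightarrow> (\<exists>s\<in>S. \<exists>e\<in>E. s \<frown> e \<notin> U \<and> q \<in> Inf_T S E f (s \<frown> e))"

definition marking_fails where
  "marking_fails U S E f \<longleftrightarrow>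
     (\<exists>s\<in>S. \<exists>t\<in>S. same_scc S E f s t \<and> marked_yes U S E f s \<and> marked_no U S E f t)"

end

theory Submission
  imports Defs
begin

lemma dstep_star_append: "dstep_star d q (u @ v) = dstep_star d (dstep_star d q u) v"
  by (simp add: dstep_star_def)

lemma prefix_add: "prefix (i + k) a = prefix i a @ prefix k (suffix i a)"
proof -
  have "prefix (i + k) a = prefix i a @ a [i \<rightarrow> i + k]" by (rule subsequence_append)
  moreover have "prefix k (suffix i a) = a [i \<rightarrow> i + k]"
    using subsequence_prefix_suffix[where j="i+k" and i=i and w=a] by simp
  ultimately show ?thesis by simp
qed

lemma drun_add: "drun d q a (i + k) = dstep_star d (drun d q a i) (prefix k (suffix i a))"
  unfolding drun_def by (simp add: prefix_add dstep_star_append)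

lemma limit_reach:
  assumes "x \<in> limit (drun d q a)" "y \<in> limit (drun d q a)"
  shows "\<exists>u. dstep_star d x u = y"
proof -
  obtain i where i: "drun d q a i = x" using assms(1) limit_in_range by fastforce
  from assms(2) have "\<exists>n>i. drun d q a n = y" by (simp add: limit_iff_frequent INFM_nat)
  then obtain j where j: "j > i" "drun d q a j = y" by blast
  have "drun d q a (i + (j - i)) = dstep_star d x (prefix (j - i) (suffix i a))"
    using drun_add i by metis
  with j show ?thesis by auto
qed

lemma iter_suffix_mult:
  assumes "x \<noteq> []" shows "suffix (j * length x) (x\<^sup>\<omega>) = x\<^sup>\<omega>"
  using assms by (auto simp: fun_eq_iff)

lemma iter_prefix:
  assumes "x \<noteq> []" shows "prefix (length x) (x\<^sup>\<omega>) = x"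
  using assms by (auto intro: nth_equalityI)

context
  fixes U D :: "('a::finite) word set"
    and S :: "'a list set" and E :: "'a word set"
    and f :: "'a list \<Rightarrow> 'a word \<Rightarrow> bool"
  assumes tab: "obs_table U D S E f"
    and red: "reduced S E f" and clo: "closed S E f"
begin

lemma S_pref: "u @ v \<in> S \<Longrightarrow> u \<in> S"
  using tab unfolding obs_table_def by blast

lemma nil_S: "[] \<in> S"
  using tab unfolding obs_table_def by blast

lemma E_suffix: "e \<in> E \<Longrightarrow> suffix k e \<in> E"
  using tab unfolding obs_table_def by blast

lemma E_up: "e \<in> E \<Longrightarrow> ultimately_periodic e"
  using tab unfolding obs_table_def by blast

lemma f_S: "s \<in> S \<Longrightarrow> e \<in> E \<Longrightarrow> f s e \<longleftrightarrow> s \<frown> e \<in> U"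
  using tab unfolding obs_table_def by blast

lemma f_SS: "s \<in> S \<Longrightarrow> e \<in> E \<Longrightarrow> f (s @ [a]) e \<longleftrightarrow> (s @ [a]) \<frown> e \<in> U"
  using tab unfolding obs_table_def by blast

lemma red_eq: "x \<in> S \<Longrightarrow> y \<in> S \<Longrightarrow> row_eq E f x y \<Longrightarrow> x = y"
  using red unfolding reduced_def by blast

lemma delta_props:
  assumes "s \<in> S"
  shows "delta_f S E f s a \<in> S \<and> row_eq E f (s @ [a]) (delta_f S E f s a)"
proof -
  obtain t where t: "t \<in> S" "row_eq E f (s @ [a]) t" using clo assms unfolding closed_def by blast
  have u: "t' = t" if h: "t' \<in> S \<and> row_eq E f (s @ [a]) t'" for t'
  proof -
    have "row_eq E f t' t" using h t unfolding row_eq_def by simp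
    then show ?thesis using h t(1) red_eq[of t' t] by simp
  qed
  have "delta_f S E f s a = t" unfolding delta_f_def
    proof (rule the_equality)
    show "t \<in> S \<and> row_eq E f (s @ [a]) t" using t by simp
  qed (rule u)
  with t show ?thesis by simp
qed

lemma delta_eq:
  assumes "s \<in> S" "t \<in> S" "row_eq E f (s @ [a]) t"
  shows "delta_f S E f s a = t"
proof -
  have "row_eq E f (delta_f S E f s a) t" using delta_props[OF assms(1), of a] assms(3)
    unfolding row_eq_def by simp
  then show ?thesis using delta_props[OF assms(1), of a] assms(2) red_eq[of "delta_f S E f s a" t] by simp
qed

lemma star_S: "s \<in> S \<Longrightarrow> dstep_star (delta_f S E f) s w \<in> S"
proof (induction w arbitrary: s)
  case Nil then show ?case by (simp add: dstep_star_def)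
next
  case (Cons a w)
  have "dstep_star (delta_f S E f) s (a # w) = dstep_star (delta_f S E f) (delta_f S E f s a) w"
    by (simp add: dstep_star_def)
  then show ?case using Cons delta_props by metis
qed

lemma star_self: "s \<in> S \<Longrightarrow> dstep_star (delta_f S E f) [] s = s"
proof (induction s rule: rev_induct)
  case Nil then show ?case by (simp add: dstep_star_def)
next
  case (snoc a s)
  have sS: "s \<in> S" using snoc S_pref by blast
  have "dstep_star (delta_f S E f) [] (s @ [a]) = delta_f S E f s a"
    using snoc sS by (simp add: dstep_star_def)
  also have "\<dots> = s @ [a]" using delta_eq[OF sS snoc(2)] by (simp add: row_eq_def)
  finally show ?case .
qed

lemma drun_Suc: "drun d q a (Suc n) = d (drun d q a n) (a n)"
  unfolding drun_def dstep_star_def by simp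

lemma invariant:
  assumes s1: "s1 \<in> S" and e1: "e1 \<in> E" and n: "n \<ge> length s1"
  shows "drun (delta_f S E f) [] (s1 \<frown> e1) n \<in> S \<and>
         (drun (delta_f S E f) [] (s1 \<frown> e1) n \<frown> suffix n (s1 \<frown> e1) \<in> U \<longleftrightarrow> s1 \<frown> e1 \<in> U)"
  using n
proof (induction n rule: dec_induct)
  case base
  have "drun (delta_f S E f) [] (s1 \<frown> e1) (length s1) = s1"
    unfolding drun_def using star_self[OF s1] by simp
  then show ?case using s1 by simp
next
  case (step n)
  let ?r = "drun (delta_f S E f) [] (s1 \<frown> e1)"
  let ?al = "s1 \<frown> e1"
  define q where "q = ?r n"
  define b where "b = suffix (Suc n) ?al"
  have qS: "q \<in> S" using step q_def by simp
  have bE: "b \<in> E" unfolding b_def using step(1) E_suffix[OF e1] by simp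
  have rs: "?r (Suc n) = delta_f S E f q (?al n)" using drun_Suc q_def by metis
  have dp: "delta_f S E f q (?al n) \<in> S \<and> row_eq E f (q @ [?al n]) (delta_f S E f q (?al n))"
    using delta_props[OF qS] by blast
  have sn: "suffix n ?al = ?al n ## b" unfolding b_def by simp
  have "q \<frown> suffix n ?al = (q @ [?al n]) \<frown> b" unfolding sn by simp
  hence "q \<frown> suffix n ?al \<in> U \<longleftrightarrow> f (q @ [?al n]) b" using f_SS[OF qS bE] by simp
  also have "\<dots> \<longleftrightarrow> f (delta_f S E f q (?al n)) b" using dp bE unfolding row_eq_def by blast
  also have "\<dots> \<longleftrightarrow> ?r (Suc n) \<frown> b \<in> U" using f_S[OF _ bE] dp rs by simp
  finally have X: "q \<frown> suffix n ?al \<in> U \<longleftrightarrow> ?r (Suc n) \<frown> b \<in> U" .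
  have IH: "q \<frown> suffix n ?al \<in> U \<longleftrightarrow> ?al \<in> U" using step(3) unfolding q_def by blast
  have "?r (Suc n) \<in> S" using dp rs by simp
  then show ?case using X IH unfolding b_def by blast
qed

lemma S_fin: "finite S"
  using tab unfolding obs_table_def by blast

lemma main_part:
  assumes s1: "s1 \<in> S" and e1: "e1 \<in> E" and q0: "q0 \<in> Inf_T S E f (s1 \<frown> e1)"
  shows "\<exists>s x. s \<in> S \<and> x \<noteq> [] \<and> x\<^sup>\<omega> \<in> E \<and> s \<in> Inf_T S E f (s \<frown> x\<^sup>\<omega>) \<and>
     (f s (x\<^sup>\<omega>) \<longleftrightarrow> s1 \<frown> e1 \<in> U) \<and>
     (\<exists>u. delta_f_star S E f s u = q0) \<and> (\<exists>u. delta_f_star S E f q0 u = s)"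
proof -
  obtain u v where uv: "v \<noteq> []" "e1 = u \<frown> v\<^sup>\<omega>"
    using E_up[OF e1] unfolding ultimately_periodic_def by blast
  define al where "al = s1 \<frown> e1"
  define d where "d = delta_f S E f"
  define r where "r = drun d [] al"
  define p where "p = length v"
  define N0 where "N0 = length s1 + length u"
  have p0: "p > 0" using uv p_def by simp
  have alv: "al j = v ! ((j - N0) mod p)" if "j \<ge> N0" for j
  proof -
    have "al = (s1 @ u) \<frown> v\<^sup>\<omega>" unfolding al_def uv by simp
    then show ?thesis using that uv(1) by (simp add: N0_def p_def)
  qed
  have per1: "al (i + p) = al i" if "i \<ge> N0" for i
  proof -
    have e: "i + p - N0 = (i - N0) + p" using that by simp
    have "al (i + p) = v ! ((i + p - N0) mod p)" using alv[of "i+p"] that by linarith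
    also have "\<dots> = v ! ((i - N0) mod p)" unfolding e by (simp only: mod_add_self2)
    also have "\<dots> = al i" using alv[of i] that by simp
    finally show ?thesis .
  qed
  have per: "al (i + c * p) = al i" if "i \<ge> N0" for i c
  proof (induction c)
    case 0 show ?case by simp
  next
    case (Suc c)
    have "al (i + Suc c * p) = al ((i + c * p) + p)" by (simp add: algebra_simps)
    also have "\<dots> = al (i + c * p)" using per1 that by simp
    also have "\<dots> = al i" using Suc by simp
    finally show ?case .
  qed
  have rS: "r m \<in> S" if "m \<ge> length s1" for m
    using invariant[OF s1 e1 that] unfolding r_def d_def al_def by blast
  have rU: "r m \<frown> suffix m al \<in> U \<longleftrightarrow> al \<in> U" if "m \<ge> length s1" for m
    using invariant[OF s1 e1 that] unfolding r_def d_def al_def by blast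
  define g where "g k = r (N0 + k * p)" for k
  have gS: "range g \<subseteq> S" using rS unfolding g_def N0_def by auto
  have "\<not> inj g"
  proof
    assume "inj g"
    moreover have "finite (range g)" using finite_subset[OF gS S_fin] .
    ultimately have "finite (UNIV::nat set)" using finite_imageD by blast
    then show False by simp
  qed
  then obtain k1 k2 where "k1 \<noteq> k2" "g k1 = g k2" unfolding inj_def by blast
  then obtain a b where ab: "a < b" "g a = g b" by (metis linorder_neqE_nat)
  define n where "n = N0 + a * p"
  define L where "L = (b - a) * p"
  define x where "x = prefix L (suffix n al)"
  define s where "s = r n"
  have nge: "n \<ge> length s1" unfolding n_def N0_def by simp
  have sS: "s \<in> S" using rS[OF nge] s_def by simp
  have L0: "L > 0" using ab p0 L_def by simp
  have xlen: "length x = L" by (simp add: x_def)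
  have xne: "x \<noteq> []" using L0 xlen by auto
  have perL: "al (i + c * L) = al i" if "i \<ge> N0" for i c
    using per[OF that, of "c * (b - a)"] by (simp add: L_def mult.assoc)
  have sufL: "suffix (n + j * L) al = suffix n al" for j
  proof
    fix i
    have "al (n + i + j * L) = al (n + i)" using perL[of "n + i" j] by (simp add: n_def)
    then show "suffix (n + j * L) al i = suffix n al i" by (simp add: algebra_simps)
  qed
  have xw: "x\<^sup>\<omega> = suffix n al"
  proof
    fix j
    have "x\<^sup>\<omega> j = x ! (j mod L)" using xne xlen L0 by simp
    also have "\<dots> = al (n + j mod L)" using L0 by (simp add: x_def)
    also have "\<dots> = al (n + j mod L + (j div L) * L)"
      using perL[of "n + j mod L" "j div L"] by (simp add: n_def)
    also have "n + j mod L + (j div L) * L = n + j" by (simp add: mod_div_mult_eq add.assoc)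
    finally show "x\<^sup>\<omega> j = suffix n al j" by simp
  qed
  have xE: "x\<^sup>\<omega> \<in> E"
  proof -
    have "suffix n al = suffix (n - length s1) e1" unfolding al_def using nge by simp
    then show ?thesis using xw E_suffix[OF e1] by simp
  qed
  have nL: "n + L = N0 + b * p"
  proof -
    have "(b - a) * p + a * p = b * p"
      by (metis ab(1) add_mult_distrib le_add_diff_inverse2 less_imp_le)
    then show ?thesis unfolding n_def L_def by simp
  qed
  have loop: "dstep_star d s x = s"
  proof -
    have "r (n + L) = dstep_star d (r n) x" unfolding r_def x_def by (rule drun_add)
    moreover have "r (n + L) = s" using ab(2) unfolding g_def s_def nL n_def[symmetric] by simp
    ultimately show ?thesis unfolding s_def by simp
  qed
  have rj: "r (n + j * L) = s" for j
  proof (induction j)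
    case 0 show ?case by (simp add: s_def)
  next
    case (Suc j)
    have "r (n + Suc j * L) = r ((n + j * L) + L)" by (simp add: algebra_simps)
    also have "\<dots> = dstep_star d (r (n + j * L)) (prefix L (suffix (n + j * L) al))"
      unfolding r_def by (rule drun_add)
    also have "\<dots> = dstep_star d s x" using Suc sufL x_def by simp
    finally show ?case using loop by simp
  qed
  have sLim: "s \<in> limit r"
    unfolding limit_iff_frequent INFM_nat
  proof
    fix m
    have mm: "m \<le> m * L" using L0 by simp
    have "n + Suc m * L > m" using L0 mm by (simp only: mult_Suc)
    then show "\<exists>k>m. r k = s" using rj by blast
  qed
  have q0L: "q0 \<in> limit r" using q0 unfolding r_def d_def al_def dInf_def by simp
  have sInf: "s \<in> Inf_T S E f (s \<frown> x\<^sup>\<omega>)"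
  proof -
    define r' where "r' = drun d [] (s \<frown> x\<^sup>\<omega>)"
    have r'j: "r' (length s + j * L) = s" for j
    proof (induction j)
      case 0
      have "r' (length s) = dstep_star d [] s" unfolding r'_def drun_def by simp
      then show ?case using star_self[OF sS] d_def by simp
    next
      case (Suc j)
      have "r' (length s + Suc j * L) = r' ((length s + j * L) + L)" by (simp add: algebra_simps)
      also have "\<dots> = dstep_star d (r' (length s + j * L))
                        (prefix L (suffix (length s + j * L) (s \<frown> x\<^sup>\<omega>)))"
        unfolding r'_def by (rule drun_add)
      also have "suffix (length s + j * L) (s \<frown> x\<^sup>\<omega>) = x\<^sup>\<omega>"
        using iter_suffix_mult[OF xne, of j] xlen by simp
      also have "prefix L (x\<^sup>\<omega>) = x" using iter_prefix[OF xne] xlen by simp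
      finally show ?case using Suc loop by simp
    qed
    have "s \<in> limit r'"
      unfolding limit_iff_frequent INFM_nat
    proof
      fix m
      have mm: "m \<le> m * L" using L0 by simp
    have "length s + Suc m * L > m" using L0 mm by (simp only: mult_Suc)
      then show "\<exists>k>m. r' k = s" using r'j by blast
    qed
    then show ?thesis unfolding r'_def d_def dInf_def .
  qed
  have fs: "f s (x\<^sup>\<omega>) \<longleftrightarrow> s1 \<frown> e1 \<in> U"
    using f_S[OF sS xE] xw rU[OF nge] s_def al_def by simp
  have r1: "\<exists>u. dstep_star d s u = q0" by (rule limit_reach[OF sLim[unfolded r_def] q0L[unfolded r_def]])
  have r2: "\<exists>u. dstep_star d q0 u = s" by (rule limit_reach[OF q0L[unfolded r_def] sLim[unfolded r_def]])
  show ?thesis using sS xne xE sInf fs r1 r2 unfolding d_def by blast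
qed

end

theorem lemma7:
  fixes U D :: "('a::finite) word set"
    and S :: "'a list set" and E :: "'a word set"
    and f :: "'a list \<Rightarrow> 'a word \<Rightarrow> bool"
  assumes "weak_dba_recognizable U"
    and "omega_regular D" and "trivial_right_congruence D"
    and "obs_table U D S E f"
    and "reduced S E f" and "closed S E f"
    and "marking_fails U S E f"
  shows "\<exists>s\<in>S. \<exists>t\<in>S. \<exists>z w x y.
           delta_f_star S E f [] (s @ z) = t \<and> delta_f_star S E f [] (t @ w) = s \<and>
           x \<noteq> [] \<and> y \<noteq> [] \<and> x\<^sup>\<omega> \<in> E \<and> y\<^sup>\<omega> \<in> E \<and>
           s \<in> Inf_T S E f (s \<frown> x\<^sup>\<omega>) \<and> t \<in> Inf_T S E f (t \<frown> y\<^sup>\<omega>) \<and>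
           f s (x\<^sup>\<omega>) \<and> \<not> f t (y\<^sup>\<omega>)"
proof -
  note tab = assms(4) and red = assms(5) and clo = assms(6)
  obtain s0 t0 where st0: "s0 \<in> S" "t0 \<in> S" "same_scc S E f s0 t0"
    "marked_yes U S E f s0" "marked_no U S E f t0"
    using assms(7) unfolding marking_fails_def by blast
  obtain s1 e1 where se1: "s1 \<in> S" "e1 \<in> E" "s1 \<frown> e1 \<in> U" "s0 \<in> Inf_T S E f (s1 \<frown> e1)"
    using st0(4) unfolding marked_yes_def by blast
  obtain s2 e2 where se2: "s2 \<in> S" "e2 \<in> E" "s2 \<frown> e2 \<notin> U" "t0 \<in> Inf_T S E f (s2 \<frown> e2)"
    using st0(5) unfolding marked_no_def by blast
  obtain s x where sx: "s \<in> S" "x \<noteq> []" "x\<^sup>\<omega> \<in> E" "s \<in> Inf_T S E f (s \<frown> x\<^sup>\<omega>)"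
     "f s (x\<^sup>\<omega>) \<longleftrightarrow> s1 \<frown> e1 \<in> U"
     "\<exists>u. delta_f_star S E f s u = s0" "\<exists>u. delta_f_star S E f s0 u = s"
    using main_part[OF tab red clo se1(1,2,4)] by blast
  obtain t y where ty: "t \<in> S" "y \<noteq> []" "y\<^sup>\<omega> \<in> E" "t \<in> Inf_T S E f (t \<frown> y\<^sup>\<omega>)"
     "f t (y\<^sup>\<omega>) \<longleftrightarrow> s2 \<frown> e2 \<in> U"
     "\<exists>u. delta_f_star S E f t u = t0" "\<exists>u. delta_f_star S E f t0 u = t"
    using main_part[OF tab red clo se2(1,2,4)] by blast
  obtain u1 where u1: "delta_f_star S E f s u1 = s0" using sx(6) by blast
  obtain u2 where u2: "delta_f_star S E f s0 u2 = t0" using st0(3) unfolding same_scc_def by blast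
  obtain u3 where u3: "delta_f_star S E f t0 u3 = t" using ty(7) by blast
  obtain w1 where w1: "delta_f_star S E f t w1 = t0" using ty(6) by blast
  obtain w2 where w2: "delta_f_star S E f t0 w2 = s0" using st0(3) unfolding same_scc_def by blast
  obtain w3 where w3: "delta_f_star S E f s0 w3 = s" using sx(7) by blast
  have "delta_f_star S E f [] (s @ (u1 @ u2 @ u3)) = t"
    using star_self[OF tab red clo sx(1)] u1 u2 u3 by (simp add: dstep_star_append)
  moreover have "delta_f_star S E f [] (t @ (w1 @ w2 @ w3)) = s"
    using star_self[OF tab red clo ty(1)] w1 w2 w3 by (simp add: dstep_star_append)
  ultimately show ?thesis using sx ty se1(3) se2(3) by blast
qed

end
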